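(* Let $p\in(0,1)$ and let $Y=[\xi_{ij}]$ be a $p$-robust random 0–1 matrix of size $n\times n$ (with otherwise arbitrary distribution). Then $$\Pr(Y\text{ has a perfect matching})\ge 1-(n+1)^3(1-p)^{\lfloor n/2\rfloor}.$$
   Context: A perfect matching of a 0–1 $n\times n$ matrix $Y$ is a choice of indices $((i_1,1),\dots,(i_n,n))$ with $\{i_1,\dots,i_n\}=\{1,\dots,n\}$ and $\xi_{i_j,j}=1$ for all $j$ (equivalently, a perfect matching of the bipartite graph with bi-adjacency matrix $Y$). In an $n\times n$ matrix, $(i,j)\prec(k,\ell)$ if $i<k$, or $i=k$ and $j<\ell$. $Y$ is $p$-robust if for every $(i,j)$, every set of positions $(i_1,j_1),\dots,(i_r,j_r)\prec(i,j)$ and every $a_1,\dots,a_r\in\{0,1\}$ with the conditioning event of positive probability, $\Pr(\xi_{ij}=1\mid\xi_{i_1j_1}=a_1,\dots,\xi_{i_rj_r}=a_r)\ge p$ (and $\Pr(\xi_{ij}=1)\ge p$). *)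

theory Defs
  imports "HOL-Probability.Probability"
begin

text \<open>An n x n 0-1 matrix is modelled as a function Y :: nat => nat => bool,
  where Y i j (for i, j < n, 0-based) is the entry xi_ij (True = 1).
  Entries outside the range are irrelevant. A random 0-1 matrix is a
  probability mass function on such matrices (every distribution on the
  finite set of n x n 0-1 matrices is discrete).\<close>

definition has_perfect_matching :: "nat \<Rightarrow> (nat \<Rightarrow> nat \<Rightarrow> bool) \<Rightarrow> bool" where
  "has_perfect_matching n Y \<longleftrightarrow>
     (\<exists>\<sigma>. bij_betw \<sigma> {..<n} {..<n} \<and> (\<forall>j<n. Y (\<sigma> j) j))"

definition pos_prec :: "nat \<times> nat \<Rightarrow> nat \<times> nat \<Rightarrow> bool" where
  "pos_prec x y \<longleftrightarrow> fst x < fst y \<or> (fst x = fst y \<and> snd x < snd y)"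

definition p_robust :: "real \<Rightarrow> nat \<Rightarrow> (nat \<Rightarrow> nat \<Rightarrow> bool) pmf \<Rightarrow> bool" where
  "p_robust p n Y \<longleftrightarrow>
     (\<forall>i<n. \<forall>j<n. \<forall>S a.
        S \<subseteq> {(k, l). k < n \<and> l < n \<and> pos_prec (k, l) (i, j)} \<longrightarrow>
        (let E = {M. \<forall>(k, l)\<in>S. M k l = a (k, l)} in
          measure_pmf.prob Y E > 0 \<longrightarrow>
          measure_pmf.prob Y (E \<inter> {M. M i j}) / measure_pmf.prob Y E \<ge> p))"

end

theory Submission
  imports Defs
begin


lemma card_minus_one_le: "finite A \<Longrightarrow> card A - 1 \<le> card (A - {b})"
  by (cases "b \<in> A") (auto simp: card_Diff_singleton)

lemma hall:
  fixes Y :: "nat \<Rightarrow> nat \<Rightarrow> bool"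
  assumes "finite A" "finite B"
    "\<forall>X\<subseteq>A. card X \<le> card {i\<in>B. \<exists>j\<in>X. Y i j}"
  shows "\<exists>\<sigma>. inj_on \<sigma> A \<and> (\<forall>j\<in>A. \<sigma> j \<in> B \<and> Y (\<sigma> j) j)"
  using assms
proof (induction "card A" arbitrary: A B rule: less_induct)
  case less
  define N where "N X = {i\<in>B. \<exists>j\<in>X. Y i j}" for X
  have fN: "finite (N X)" for X unfolding N_def using less.prems(2) by simp
  have hallA: "card X \<le> card (N X)" if "X \<subseteq> A" for X using less.prems(3) that unfolding N_def by blast
  show ?case
  proof (cases "A = {}")
    case True then show ?thesis by auto
  next
    case False
    show ?thesis
    proof (cases "\<exists>X. X \<subseteq> A \<and> X \<noteq> {} \<and> X \<noteq> A \<and> card (N X) = card X")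
      case True
      then obtain X where X: "X \<subseteq> A" "X \<noteq> {}" "X \<noteq> A" "card (N X) = card X" by blast
      have fX: "finite X" using X(1) less.prems(1) finite_subset by blast
      have cX: "card X < card A" using X(1,3) less.prems(1) psubset_card_mono by blast
      have "\<exists>\<sigma>. inj_on \<sigma> X \<and> (\<forall>j\<in>X. \<sigma> j \<in> N X \<and> Y (\<sigma> j) j)"
      proof (rule less.hyps[OF cX fX fN])
        show "\<forall>Z\<subseteq>X. card Z \<le> card {i\<in>N X. \<exists>j\<in>Z. Y i j}"
        proof (intro allI impI)
          fix Z assume "Z \<subseteq> X"
          have "{i\<in>N X. \<exists>j\<in>Z. Y i j} = N Z" using \<open>Z \<subseteq> X\<close> unfolding N_def by auto
          then show "card Z \<le> card {i\<in>N X. \<exists>j\<in>Z. Y i j}" using hallA \<open>Z\<subseteq>X\<close> X(1) by auto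
        qed
      qed
      then obtain \<sigma>1 where s1: "inj_on \<sigma>1 X" "\<forall>j\<in>X. \<sigma>1 j \<in> N X \<and> Y (\<sigma>1 j) j" by blast
      have cAX: "card (A - X) < card A"
        proof -
        have "card X > 0" using fX X(2) by auto
        moreover have "card X \<le> card A" using X(1) less.prems(1) card_mono by blast
        ultimately show ?thesis using X(1) fX by (simp add: card_Diff_subset)
      qed
      have "\<exists>\<sigma>. inj_on \<sigma> (A - X) \<and> (\<forall>j\<in>A-X. \<sigma> j \<in> B - N X \<and> Y (\<sigma> j) j)"
      proof (rule less.hyps[OF cAX])
        show "finite (A-X)" using less.prems(1) by simp
        show "finite (B - N X)" using less.prems(2) by simp
        show "\<forall>Z\<subseteq>A-X. card Z \<le> card {i\<in>B - N X. \<exists>j\<in>Z. Y i j}"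
        proof (intro allI impI)
          fix Z assume Z: "Z \<subseteq> A - X"
          have fZ: "finite Z" using Z less.prems(1) finite_subset by blast
          have h1: "card (Z \<union> X) \<le> card (N (Z \<union> X))" using Z X(1) by (intro hallA) auto
          have h2: "N (Z \<union> X) = {i\<in>B - N X. \<exists>j\<in>Z. Y i j} \<union> N X" unfolding N_def by auto
          have h3: "card (N (Z \<union> X)) \<le> card {i\<in>B - N X. \<exists>j\<in>Z. Y i j} + card (N X)"
            unfolding h2 by (rule card_Un_le)
          have h4: "card (Z \<union> X) = card Z + card X" using Z fZ fX by (intro card_Un_disjoint) auto
          show "card Z \<le> card {i\<in>B - N X. \<exists>j\<in>Z. Y i j}" using h1 h3 h4 X(4) by linarith
        qed
      qed
      then obtain \<sigma>2 where s2: "inj_on \<sigma>2 (A - X)" "\<forall>j\<in>A-X. \<sigma>2 j \<in> B - N X \<and> Y (\<sigma>2 j) j" by blast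
      define \<sigma> where "\<sigma> j = (if j \<in> X then \<sigma>1 j else \<sigma>2 j)" for j
      have "inj_on \<sigma> A"
        unfolding inj_on_def
      proof (intro ballI impI)
        fix x y assume xy: "x \<in> A" "y \<in> A" "\<sigma> x = \<sigma> y"
        show "x = y"
        proof (cases "x \<in> X"; cases "y \<in> X")
          assume "x \<in> X" "y \<in> X" then show ?thesis using xy s1(1) unfolding \<sigma>_def inj_on_def by auto
        next
          assume "x \<in> X" "y \<notin> X"
          then have "\<sigma> x \<in> N X" "\<sigma> y \<notin> N X" using xy(1,2) s1(2) s2(2) unfolding \<sigma>_def by auto
          then show ?thesis using xy(3) by simp
        next
          assume "x \<notin> X" "y \<in> X"
          then have "\<sigma> y \<in> N X" "\<sigma> x \<notin> N X" using xy(1,2) s1(2) s2(2) unfolding \<sigma>_def by auto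
          then show ?thesis using xy(3) by simp
        next
          assume "x \<notin> X" "y \<notin> X" then show ?thesis using xy s2(1) unfolding \<sigma>_def inj_on_def by auto
        qed
      qed
      moreover have "\<forall>j\<in>A. \<sigma> j \<in> B \<and> Y (\<sigma> j) j"
        proof
        fix j assume "j \<in> A"
        then show "\<sigma> j \<in> B \<and> Y (\<sigma> j) j" using s1(2) s2(2) unfolding \<sigma>_def N_def
          by (cases "j \<in> X") auto
      qed
      ultimately show ?thesis by blast
    next
      case False
      have tight: "card X < card (N X)" if "X \<subseteq> A" "X \<noteq> {}" "X \<noteq> A" for X
        using False hallA[OF that(1)] that by (metis le_neq_implies_less)
      obtain a where a: "a \<in> A" using \<open>A \<noteq> {}\<close> by blast
      have "card {a} \<le> card (N {a})" using a by (intro hallA) auto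
      then have "N {a} \<noteq> {}" by auto
      then obtain b where b: "b \<in> B" "Y b a" unfolding N_def by auto
      have cA: "card (A - {a}) < card A" using a less.prems(1) by (metis card_Diff1_less)
      have "\<exists>\<sigma>. inj_on \<sigma> (A - {a}) \<and> (\<forall>j\<in>A-{a}. \<sigma> j \<in> B - {b} \<and> Y (\<sigma> j) j)"
      proof (rule less.hyps[OF cA])
        show "finite (A-{a})" using less.prems(1) by simp
        show "finite (B - {b})" using less.prems(2) by simp
        show "\<forall>Z\<subseteq>A-{a}. card Z \<le> card {i\<in>B - {b}. \<exists>j\<in>Z. Y i j}"
        proof (intro allI impI)
          fix Z assume Z: "Z \<subseteq> A - {a}"
          show "card Z \<le> card {i\<in>B - {b}. \<exists>j\<in>Z. Y i j}"
          proof (cases "Z = {}")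
            case True then show ?thesis by simp
          next
            case False
            have "Z \<noteq> A" using Z a by auto
            then have "card Z < card (N Z)" using tight Z False by auto
            moreover have "{i\<in>B - {b}. \<exists>j\<in>Z. Y i j} = N Z - {b}" unfolding N_def by auto
            moreover have "card (N Z) - 1 \<le> card (N Z - {b})" using card_minus_one_le[OF fN] by blast
            ultimately show ?thesis by simp
          qed
        qed
      qed
      then obtain \<sigma>' where s: "inj_on \<sigma>' (A - {a})" "\<forall>j\<in>A-{a}. \<sigma>' j \<in> B - {b} \<and> Y (\<sigma>' j) j" by blast
      define \<sigma> where "\<sigma> = \<sigma>'(a := b)"
      have "inj_on \<sigma> A"
        unfolding inj_on_def
      proof (intro ballI impI)
        fix x y assume xy: "x \<in> A" "y \<in> A" "\<sigma> x = \<sigma> y"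
        show "x = y"
        proof (cases "x = a"; cases "y = a")
          assume "x = a" "y \<noteq> a"
          then have "\<sigma> y \<noteq> b" using s(2) xy(2) unfolding \<sigma>_def by auto
          then show ?thesis using xy(3) \<open>x = a\<close> unfolding \<sigma>_def by simp
        next
          assume "x \<noteq> a" "y = a"
          then have "\<sigma> x \<noteq> b" using s(2) xy(1) unfolding \<sigma>_def by auto
          then show ?thesis using xy(3) \<open>y = a\<close> unfolding \<sigma>_def by simp
        next
          assume "x \<noteq> a" "y \<noteq> a"
          then show ?thesis using xy s(1) unfolding \<sigma>_def inj_on_def by auto
        qed simp
      qed
      moreover have "\<forall>j\<in>A. \<sigma> j \<in> B \<and> Y (\<sigma> j) j"
        using s(2) b unfolding \<sigma>_def by auto
      ultimately show ?thesis by blast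
    qed
  qed
qed


lemma no_pm_block:
  assumes "\<not> has_perfect_matching n M"
  shows "\<exists>r\<le>n+1. \<exists>R C. R \<subseteq> {..<n} \<and> card R = r \<and> C \<subseteq> {..<n} \<and> card C = n + 1 - r
     \<and> (\<forall>i\<in>R. \<forall>j\<in>C. \<not> M i j)"
proof -
  have "\<exists>X\<subseteq>{..<n}. card {i\<in>{..<n}. \<exists>j\<in>X. M i j} < card X"
  proof (rule ccontr)
    assume "\<not> ?thesis"
    then have "\<forall>X\<subseteq>{..<n}. card X \<le> card {i\<in>{..<n}. \<exists>j\<in>X. M i j}" by (auto simp: not_less)
    from hall[OF _ _ this] obtain \<sigma> where s: "inj_on \<sigma> {..<n}" "\<forall>j\<in>{..<n}. \<sigma> j \<in> {..<n} \<and> M (\<sigma> j) j"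
      by auto
    have "\<sigma> ` {..<n} = {..<n}" using s by (intro endo_inj_surj) auto
    then have "bij_betw \<sigma> {..<n} {..<n}" using s(1) by (simp add: bij_betw_def)
    then show False using assms s(2) unfolding has_perfect_matching_def by auto
  qed
  then obtain X where X: "X \<subseteq> {..<n}" "card {i\<in>{..<n}. \<exists>j\<in>X. M i j} < card X" by blast
  define NX where "NX = {i\<in>{..<n}. \<exists>j\<in>X. M i j}"
  have cX: "card X \<le> n" using X(1) by (metis card_lessThan card_mono finite_lessThan)
  have "card ({..<n} - NX) = n - card NX" unfolding NX_def by (subst card_Diff_subset) auto
  then have "n + 1 - card X \<le> card ({..<n} - NX)" using X(2) cX unfolding NX_def by linarith
  then obtain R where R: "R \<subseteq> {..<n} - NX" "card R = n + 1 - card X"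
    by (meson obtain_subset_with_card_n)
  show ?thesis
  proof (intro exI conjI)
    show "n + 1 - card X \<le> n + 1" by simp
    show "R \<subseteq> {..<n}" using R by auto
    show "card R = n + 1 - card X" by fact
    show "X \<subseteq> {..<n}" by fact
    show "card X = n + 1 - (n + 1 - card X)" using cX by simp
    show "\<forall>i\<in>R. \<forall>j\<in>X. \<not> M i j" using R(1) unfolding NX_def by auto
  qed
qed



lemma lex_prec:
  fixes k l i j n :: nat
  assumes "l < n" "j < n" "k * n + l \<le> i * n + j" "(k, l) \<noteq> (i, j)"
  shows "pos_prec (k, l) (i, j)"
proof (rule ccontr)
  assume np: "\<not> pos_prec (k, l) (i, j)"
  show False
  proof (cases "k = i")
    case True
    then show False using np assms unfolding pos_prec_def by auto
  next
    case False
    then have "Suc i \<le> k" using np unfolding pos_prec_def by auto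
    then have "Suc i * n \<le> k * n" by (rule mult_le_mono1)
    then show False using assms by simp
  qed
qed

lemma zero_prob:
  assumes rob: "p_robust p n Y" and p1: "p \<le> 1"
  shows "finite T \<Longrightarrow> T \<subseteq> {..<n} \<times> {..<n} \<Longrightarrow>
    measure_pmf.prob Y {M. \<forall>(k,l)\<in>T. \<not> M k l} \<le> (1 - p) ^ card T"
proof (induction "card T" arbitrary: T)
  case 0
  then have "T = {}" by simp
  then show ?case by (simp add: measure_pmf.prob_le_1)
next
  case (Suc c)
  define f where "f = (\<lambda>(k::nat,l::nat). k * n + l)"
  have "T \<noteq> {}" using Suc by auto
  then have "Max (f ` T) \<in> f ` T" using Suc.prems by simp
  then obtain t where t: "t \<in> T" "f t = Max (f ` T)" by auto
  obtain i j where ij: "t = (i, j)" by (cases t)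
  have ijn: "i < n" "j < n" using t ij Suc.prems by auto
  define S where "S = T - {(i,j)}"
  have cS: "c = card S" using Suc.hyps(2) t ij Suc.prems(1) unfolding S_def by simp
  have fS: "finite S" "S \<subseteq> {..<n} \<times> {..<n}" using Suc.prems unfolding S_def by auto
  have IH: "measure_pmf.prob Y {M. \<forall>(k,l)\<in>S. \<not> M k l} \<le> (1 - p) ^ c"
    using Suc.hyps(1)[OF cS fS] cS by simp
  have Sprec: "S \<subseteq> {(k, l). k < n \<and> l < n \<and> pos_prec (k, l) (i, j)}"
  proof
    fix x assume x: "x \<in> S"
    obtain k l where kl: "x = (k, l)" by (cases x)
    have "f x \<le> f t" using t x Suc.prems(1) unfolding S_def by simp
    then have "k * n + l \<le> i * n + j" using kl ij unfolding f_def by simp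
    moreover have "k < n" "l < n" using x kl fS by auto
    moreover have "(k, l) \<noteq> (i, j)" using x kl unfolding S_def by auto
    ultimately show "x \<in> {(k, l). k < n \<and> l < n \<and> pos_prec (k, l) (i, j)}"
      using kl lex_prec ijn by auto
  qed
  define E where "E = {M. \<forall>(k, l)\<in>S. M k l = (\<lambda>_. False) (k, l)}"
  have rob': "measure_pmf.prob Y E > 0 \<longrightarrow>
          measure_pmf.prob Y (E \<inter> {M. M i j}) / measure_pmf.prob Y E \<ge> p"
    unfolding E_def using rob[unfolded p_robust_def Let_def, rule_format, where a="\<lambda>_. False", OF ijn Sprec]
    by blast
  have E_eq: "E = {M. \<forall>(k,l)\<in>S. \<not> M k l}" unfolding E_def by auto
  have T_eq: "{M. \<forall>(k,l)\<in>T. \<not> M k l} = E - {M. M i j}"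
    using t ij unfolding E_eq S_def by auto
  have diff: "measure_pmf.prob Y (E - {M. M i j}) = measure_pmf.prob Y E - measure_pmf.prob Y (E \<inter> {M. M i j})"
    by (rule measure_pmf.finite_measure_Diff') auto
  have q0: "0 \<le> 1 - p" using p1 by simp
  have "measure_pmf.prob Y (E - {M. M i j}) \<le> (1 - p) * measure_pmf.prob Y E"
  proof (cases "measure_pmf.prob Y E > 0")
    case True
    then have "p * measure_pmf.prob Y E \<le> measure_pmf.prob Y (E \<inter> {M. M i j})"
      using rob' by (simp add: le_divide_eq)
    then show ?thesis using diff by (simp add: algebra_simps)
  next
    case False
    then have "measure_pmf.prob Y E = 0" using measure_nonneg[of "measure_pmf Y" E] by linarith
    moreover have "measure_pmf.prob Y (E - {M. M i j}) \<le> measure_pmf.prob Y E"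
      by (rule measure_pmf.finite_measure_mono) auto
    ultimately show ?thesis by simp
  qed
  also have "\<dots> \<le> (1 - p) * (1 - p) ^ c" using IH E_eq q0 by (simp add: mult_left_mono)
  finally show ?case using T_eq Suc.hyps(2)[symmetric] by simp
qed



lemma binom_le_s:
  assumes "k \<le> n" "1 \<le> n" "k \<le> s \<or> n - k \<le> s"
  shows "n choose k \<le> n ^ s"
proof (cases "k \<le> s")
  case True
  have "n choose k \<le> n ^ k" using assms(1) by (rule binomial_le_pow)
  also have "\<dots> \<le> n ^ s" using True assms(2) by (intro power_increasing) auto
  finally show ?thesis .
next
  case False
  then have ns: "n - k \<le> s" using assms(3) by auto
  have "n choose k = n choose (n - k)" using assms(1) by (rule binomial_symmetric)
  also have "\<dots> \<le> n ^ (n - k)" by (rule binomial_le_pow) simp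
  also have "\<dots> \<le> n ^ s" using ns assms(2) by (intro power_increasing) auto
  finally show ?thesis .
qed

lemma term_bound:
  fixes q :: real
  assumes q0: "0 \<le> q" and q1: "q \<le> 1" and small: "real n ^ 2 * q ^ (n div 2) \<le> 1" and r: "r \<le> n + 1"
  shows "real (n choose r) * real (n choose (n + 1 - r)) * q ^ (r * (n + 1 - r))
         \<le> real n ^ 2 * q ^ (n div 2)"
proof (cases "r = 0 \<or> r = n + 1")
  case True
  then have "(n choose r) * (n choose (n + 1 - r)) = 0" by auto
  then show ?thesis using q0 by (metis mult_eq_0_iff of_nat_0 of_nat_mult mult_nonneg_nonneg of_nat_0_le_iff zero_le_power)
next
  case False
  define c where "c = n + 1 - r"
  define s where "s = min r c"
  define m where "m = n div 2"
  have r1: "1 \<le> r" "r \<le> n" using False r by auto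
  have n1: "1 \<le> n" using r1 by simp
  have c1: "1 \<le> c" "c \<le> n" "r + c = n + 1" using r1 unfolding c_def by auto
  have s1: "1 \<le> s" unfolding s_def using r1 c1 by simp
  have b1: "n choose r \<le> n ^ s" using r1 c1 n1 unfolding s_def by (intro binom_le_s) auto
  have b2: "n choose c \<le> n ^ s" using r1 c1 n1 unfolding s_def by (intro binom_le_s) auto
  have sm: "s * m \<le> r * c"
  proof (cases "r \<le> c")
    case True
    then have "m \<le> c" using c1 unfolding m_def by linarith
    then show ?thesis using True unfolding s_def by simp
  next
    case False
    then have "m \<le> r" using c1 unfolding m_def by linarith
    then show ?thesis using False unfolding s_def by (simp add: mult.commute)
  qed
  have "real (n choose r) * real (n choose c) \<le> real n ^ s * real n ^ s"
    using b1 b2 by (intro mult_mono) (auto simp flip: of_nat_power)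
  moreover have "q ^ (r * c) \<le> q ^ (s * m)" using sm q0 q1 by (rule power_decreasing)
  ultimately have "real (n choose r) * real (n choose c) * q ^ (r * c)
      \<le> real n ^ s * real n ^ s * q ^ (s * m)"
    using q0 by (rule_tac mult_mono) auto
  also have "\<dots> = (real n ^ 2 * q ^ m) ^ s"
    by (simp add: power_mult power_mult_distrib power2_eq_square mult.commute)
  also have "\<dots> \<le> (real n ^ 2 * q ^ m) ^ 1"
    using s1 small q0 unfolding m_def by (intro power_decreasing) auto
  finally show ?thesis unfolding c_def m_def by simp
qed

theorem theorem5:
  fixes p :: real and n :: nat and Y :: "(nat \<Rightarrow> nat \<Rightarrow> bool) pmf"
  assumes "0 < p" and "p < 1"
    and "p_robust p n Y"
  shows "measure_pmf.prob Y {M. has_perfect_matching n M}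
           \<ge> 1 - real (n + 1) ^ 3 * (1 - p) ^ (n div 2)"
proof -
  define q where "q = 1 - p"
  define m where "m = n div 2"
  have q0: "0 \<le> q" and q1: "q \<le> 1" using assms unfolding q_def by auto
  define P where "P = measure_pmf.prob Y"
  have compl: "P {M. has_perfect_matching n M} = 1 - P {M. \<not> has_perfect_matching n M}"
  proof -
    have "{M. has_perfect_matching n M} = space (measure_pmf Y) - {M. \<not> has_perfect_matching n M}"
      by auto
    then show ?thesis unfolding P_def
      using measure_pmf.prob_compl[of "{M. \<not> has_perfect_matching n M}" Y] by simp
  qed
  show ?thesis
  proof (cases "real n ^ 2 * q ^ m \<le> 1")
    case False
    have "real n ^ 2 \<le> real (n + 1) ^ 3"
    proof -
      have "n ^ 2 \<le> (n + 1) ^ 3" by (simp add: power2_eq_square power3_eq_cube algebra_simps)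
      then show ?thesis by (metis of_nat_le_iff of_nat_power)
    qed
    then have "real n ^ 2 * q ^ m \<le> real (n + 1) ^ 3 * q ^ m" using q0 by (intro mult_right_mono) auto
    then have "1 - real (n + 1) ^ 3 * q ^ m \<le> 0" using False by linarith
    then show ?thesis using measure_nonneg[of "measure_pmf Y"] unfolding q_def m_def by (smt (verit))
  next
    case True
    define Sr where "Sr r = {R. R \<subseteq> {..<n} \<and> card R = r}" for r
    define Z where "Z R C = {M. \<forall>(k,l)\<in>R \<times> C. \<not> M k l}" for R C :: "nat set"
    have finSr: "finite (Sr r)" for r unfolding Sr_def by simp
    have cardSr: "card (Sr r) = n choose r" for r unfolding Sr_def using n_subsets[of "{..<n}" r] by simp
    have sub: "{M. \<not> has_perfect_matching n M} \<subseteq> (\<Union>r\<in>{..n+1}. \<Union>R\<in>Sr r. \<Union>C\<in>Sr (n + 1 - r). Z R C)"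
    proof
      fix M assume "M \<in> {M. \<not> has_perfect_matching n M}"
      then have "\<not> has_perfect_matching n M" by simp
      from no_pm_block[OF this] obtain r R C where rRC: "r \<le> n + 1" "R \<subseteq> {..<n}" "card R = r" "C \<subseteq> {..<n}" "card C = n + 1 - r"
        "\<forall>i\<in>R. \<forall>j\<in>C. \<not> M i j" by blast
      have "R \<in> Sr r" "C \<in> Sr (n + 1 - r)" using rRC unfolding Sr_def by auto
      moreover have "M \<in> Z R C" using rRC(6) unfolding Z_def by auto
      ultimately show "M \<in> (\<Union>r\<in>{..n+1}. \<Union>R\<in>Sr r. \<Union>C\<in>Sr (n + 1 - r). Z R C)"
        using rRC(1) by blast
    qed
    have ZP: "P (Z R C) \<le> q ^ (r * (n + 1 - r))" if "R \<in> Sr r" "C \<in> Sr (n + 1 - r)" for r R C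
    proof -
      have fin: "finite (R \<times> C)" using that unfolding Sr_def by (auto intro: finite_subset)
      have "P (Z R C) \<le> (1 - p) ^ card (R \<times> C)" unfolding P_def Z_def
      proof (rule zero_prob[OF assms(3)])
        show "p \<le> 1" using assms(2) by simp
        show "finite (R \<times> C)" by fact
        show "R \<times> C \<subseteq> {..<n} \<times> {..<n}" using that unfolding Sr_def by auto
      qed
      moreover have "card (R \<times> C) = r * (n + 1 - r)" using that unfolding Sr_def by (simp add: card_cartesian_product)
      ultimately show ?thesis unfolding q_def by simp
    qed
    have "P {M. \<not> has_perfect_matching n M} \<le> P (\<Union>r\<in>{..n+1}. \<Union>R\<in>Sr r. \<Union>C\<in>Sr (n + 1 - r). Z R C)"
      unfolding P_def using sub by (intro measure_pmf.finite_measure_mono) auto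
    also have "\<dots> \<le> (\<Sum>r\<in>{..n+1}. P (\<Union>R\<in>Sr r. \<Union>C\<in>Sr (n + 1 - r). Z R C))"
      unfolding P_def by (intro measure_pmf.finite_measure_subadditive_finite) auto
    also have "\<dots> \<le> (\<Sum>r\<in>{..n+1}. \<Sum>R\<in>Sr r. P (\<Union>C\<in>Sr (n + 1 - r). Z R C))"
      unfolding P_def by (intro sum_mono measure_pmf.finite_measure_subadditive_finite finSr) auto
    also have "\<dots> \<le> (\<Sum>r\<in>{..n+1}. \<Sum>R\<in>Sr r. \<Sum>C\<in>Sr (n + 1 - r). P (Z R C))"
      unfolding P_def by (intro sum_mono measure_pmf.finite_measure_subadditive_finite finSr) auto
    also have "\<dots> \<le> (\<Sum>r\<in>{..n+1}. \<Sum>R\<in>Sr r. \<Sum>C\<in>Sr (n + 1 - r). q ^ (r * (n + 1 - r)))"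
      by (intro sum_mono ZP) auto
    also have "\<dots> = (\<Sum>r\<in>{..n+1}. real (n choose r) * real (n choose (n + 1 - r)) * q ^ (r * (n + 1 - r)))"
      by (simp add: cardSr mult.assoc)
    also have "\<dots> \<le> (\<Sum>r\<in>{..n+1}. real n ^ 2 * q ^ m)"
      using True unfolding m_def by (intro sum_mono term_bound q0 q1) auto
    also have "\<dots> = real (n + 2) * (real n ^ 2 * q ^ m)" by simp
    also have "\<dots> \<le> real (n + 1) ^ 3 * q ^ m"
    proof -
      have "real (n + 2) * real n ^ 2 \<le> real (n + 1) ^ 3"
        by (simp add: power2_eq_square power3_eq_cube algebra_simps)
      then show ?thesis using q0 by (simp add: mult.assoc[symmetric] mult_right_mono)
    qed
    finally show ?thesis using compl unfolding P_def q_def m_def by linarith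
  qed
qed


end
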